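(* Consider a switched descriptor system $E_{\sigma(t)}\dot x=A_{\sigma(t)}x$, $\sigma(t)\in\{1,\dots,N\}$, with each $A_i$ nonsingular. For each $i$ let $C_i$ be a matrix such that $x\in\mathcal{C}(E_i,A_i)$ if and only if $C_ix=0$. Suppose there is a symmetric matrix $P$ such that for all $i=1,\dots,N$, $$P+C_i^TC_i>0,\qquad PA_i^{-1}E_i+E_i^TA_i^{-T}P-C_i^TC_i<0,$$ and that for every solution, $x(t_*^+)^TPx(t_*^+)\le x(t_*^-)^TPx(t_*^-)$ whenever $\sigma$ switches at $t_*$. Then the system is GUES.
   Context: For $E,A\in\mathbb{R}^{n\times n}$ with $A$ nonsingular, $(E,A)$ denotes the descriptor system $E\dot x=Ax$; its index is the smallest $k^*\ge0$ with $\mathrm{Im}((A^{-1}E)^{k^*+1})=\mathrm{Im}((A^{-1}E)^{k^*})$ and its consistency space is $\mathcal{C}(E,A)=\mathrm{Im}((A^{-1}E)^{k^*})$. Switched descriptor system: the switching signal $\sigma$ is piecewise constant with values in $\{1,\dots,N\}$ and finitely many discontinuities in every bounded interval. A solution is a function $x(\cdot)$ that is differentiable and satisfies $E_{\sigma(t)}\dot x(t)=A_{\sigma(t)}x(t)$ at every $t$ where $\sigma$ is continuous, and has one-sided limits $x(t_*^\pm)$ at each discontinuity $t_*$ of $\sigma$; the equation is not required at discontinuities, and the relation between $x(t_*^+)$ and $x(t_*^-)$ and the allowed switches are part of the system specification. The system is GUES if there exist $\beta,\alpha>0$ such that every solution satisfies $\|x(t)\|\le\beta e^{-\alpha(t-t_0)}\|x(t_0)\|$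 for all $t\ge t_0$. $M>0$ ($M<0$) means positive (negative) definite. *)

theory Defs
  imports "HOL-Analysis.Analysis"
begin

(* k-th matrix power M^k (note: the type-class power on vec is componentwise, so we define it) *)
definition mat_pow :: "real^'n^'n \<Rightarrow> nat \<Rightarrow> real^'n^'n" where
  "mat_pow M k = (((**) M) ^^ k) (mat 1)"

definition mat_image :: "real^'n^'m \<Rightarrow> (real^'m) set" where
  "mat_image M = range (\<lambda>x. M *v x)"

definition dae_index :: "real^'n^'n \<Rightarrow> real^'n^'n \<Rightarrow> nat" where
  "dae_index E A = (LEAST k. mat_image (mat_pow (matrix_inv A ** E) (Suc k))
                              = mat_image (mat_pow (matrix_inv A ** E) k))"

definition consistency_space :: "real^'n^'n \<Rightarrow> real^'n^'n \<Rightarrow> (real^'n) set" where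
  "consistency_space E A = mat_image (mat_pow (matrix_inv A ** E) (dae_index E A))"

definition pos_def :: "real^'n^'n \<Rightarrow> bool" where
  "pos_def M \<longleftrightarrow> transpose M = M \<and> (\<forall>x. x \<noteq> 0 \<longrightarrow> x \<bullet> (M *v x) > 0)"

definition neg_def :: "real^'n^'n \<Rightarrow> bool" where
  "neg_def M \<longleftrightarrow> transpose M = M \<and> (\<forall>x. x \<noteq> 0 \<longrightarrow> x \<bullet> (M *v x) < 0)"

(* switching signal: piecewise constant (locally constant off a set of discontinuities that is
   finite in every bounded interval; nat carries the discrete topology), values in {1..N} *)
definition switching_signal :: "nat \<Rightarrow> (real \<Rightarrow> nat) \<Rightarrow> bool" where
  "switching_signal N \<sigma> \<longleftrightarrow> (\<forall>t. \<sigma> t \<in> {1..N}) \<and>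
     (\<forall>a b. finite {t \<in> {a..b}. \<not> isCont \<sigma> t})"

definition switched_solution ::
  "nat \<Rightarrow> (nat \<Rightarrow> real^'n^'n) \<Rightarrow> (nat \<Rightarrow> real^'n^'n) \<Rightarrow> (real \<Rightarrow> nat) \<Rightarrow> (real \<Rightarrow> real^'n) \<Rightarrow> real \<Rightarrow> bool"
  where
  "switched_solution N E A \<sigma> x t0 \<longleftrightarrow>
     switching_signal N \<sigma> \<and>
     (\<forall>t\<ge>t0. isCont \<sigma> t \<longrightarrow>
        (\<exists>x'. (x has_vector_derivative x') (at t within {t0..}) \<and>
              E (\<sigma> t) *v x' = A (\<sigma> t) *v x t)) \<and>
     (\<forall>t\<ge>t0. \<not> isCont \<sigma> t \<longrightarrow>
        (\<exists>r. (x \<longlongrightarrow> r) (at_right t)) \<and>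
        (t > t0 \<longrightarrow> (\<exists>l. (x \<longlongrightarrow> l) (at_left t))) \<and>
        ((x \<longlongrightarrow> x t) (at_right t) \<or> (t > t0 \<and> (x \<longlongrightarrow> x t) (at_left t))))"

definition jump_nonincreasing :: "real^'n^'n \<Rightarrow> (real \<Rightarrow> nat) \<Rightarrow> (real \<Rightarrow> real^'n) \<Rightarrow> real \<Rightarrow> bool" where
  "jump_nonincreasing P \<sigma> x t0 \<longleftrightarrow>
     (\<forall>t>t0. \<not> isCont \<sigma> t \<longrightarrow>
        (let l = Lim (at_left t) x; r = Lim (at_right t) x in r \<bullet> (P *v r) \<le> l \<bullet> (P *v l)))"

definition GUES :: "((real \<Rightarrow> nat) \<times> (real \<Rightarrow> real^'n) \<times> real) set \<Rightarrow> bool" where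
  "GUES S \<longleftrightarrow> (\<exists>\<beta>>0. \<exists>\<alpha>>0. \<forall>(\<sigma>, x, t0)\<in>S. \<forall>t\<ge>t0.
      norm (x t) \<le> \<beta> * exp (- \<alpha> * (t - t0)) * norm (x t0))"

end

theory Submission imports Defs begin

lemma vd_quot:
  fixes f :: "real \<Rightarrow> 'a::real_normed_vector"
  assumes "(f has_vector_derivative f') (at s within T)"
  shows "((\<lambda>y. inverse (y - s) *\<^sub>R (f y - f s)) \<longlongrightarrow> f') (at s within T)"
proof -
  have "((\<lambda>y. norm ((f y - f s) - (y - s) *\<^sub>R f') / norm (y - s)) \<longlongrightarrow> 0) (at s within T)"
    using assms unfolding has_vector_derivative_def has_derivative_iff_norm by simp
  moreover have "\<forall>\<^sub>F y in at s within T. norm (inverse (y - s) *\<^sub>R (f y - f s) - f') = norm ((f y - f s) - (y - s) *\<^sub>R f') / norm (y - s)"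
  proof (rule eventually_at_filter[THEN iffD2], rule always_eventually, intro allI impI)
    fix y assume "y \<noteq> s"
    then have "inverse (y - s) *\<^sub>R (f y - f s) - f' = inverse (y - s) *\<^sub>R ((f y - f s) - (y - s) *\<^sub>R f')"
      by (simp add: scaleR_diff_right)
    then show "norm (inverse (y - s) *\<^sub>R (f y - f s) - f') = norm ((f y - f s) - (y - s) *\<^sub>R f') / norm (y - s)"
      by (simp add: divide_inverse abs_inverse mult.commute)
  qed
  ultimately have "((\<lambda>y. norm (inverse (y - s) *\<^sub>R (f y - f s) - f')) \<longlongrightarrow> 0) (at s within T)"
    by (simp add: tendsto_cong)
  then show ?thesis
    by (simp add: tendsto_norm_zero_iff LIM_zero_iff)
qed

lemma at_Ici_nontriv:
  fixes s t0 :: real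
  assumes "t0 \<le> s" shows "at s within {t0..} \<noteq> bot"
proof
  assume h: "at s within {t0..} = bot"
  have "at_right s \<le> at s within {t0..}"
    by (rule at_le) (use assms in auto)
  with h show False by (simp add: bot_unique)
qed

lemma deriv_in_subspace:
  fixes f :: "real \<Rightarrow> 'a::euclidean_space"
  assumes "(f has_vector_derivative f') (at s within {t0..})" "t0 \<le> s" "closed K" "subspace K"
    "eventually (\<lambda>u. f u \<in> K) (at s within {t0..})" "f s \<in> K"
  shows "f' \<in> K"
proof (rule Lim_in_closed_set[OF assms(3) _ at_Ici_nontriv[OF assms(2)] vd_quot[OF assms(1)]])
  show "\<forall>\<^sub>F y in at s within {t0..}. inverse (y - s) *\<^sub>R (f y - f s) \<in> K"
    using assms(5) by eventually_elim (use assms(4,6) in \<open>simp add: subspace_scale subspace_diff\<close>)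
qed

lemma mat_image_subspace: "subspace (mat_image (M::real^'n^'m))"
  unfolding mat_image_def
  by (metis linear_subspace_image matrix_vector_mul_linear subspace_UNIV)

lemma mat_image_closed: "closed (mat_image (M::real^'n^'m))"
  by (rule closed_subspace[OF mat_image_subspace])

lemma mat_bound: "\<exists>B>0. \<forall>v. norm ((M::real^'n^'m) *v v) \<le> B * norm v"
  using bounded_linear.pos_bounded[OF matrix_vector_mul_bounded_linear[of M]]
  by (auto simp: mult.commute)

lemma posdef_unif:
  fixes M :: "real^'n^'n"
  assumes "\<forall>x. x \<noteq> 0 \<longrightarrow> x \<bullet> (M *v x) > 0"
  shows "\<exists>l>0. \<forall>v. l * (norm v)^2 \<le> v \<bullet> (M *v v)"
proof -
  let ?q = "\<lambda>v. v \<bullet> (M *v v)"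
  have cont: "continuous_on (sphere 0 1) ?q"
    by (intro continuous_intros linear_continuous_on matrix_vector_mul_bounded_linear)
  have ne: "sphere (0::real^'n) 1 \<noteq> {}" by simp
  obtain u where u: "u \<in> sphere 0 1" and umin: "\<forall>y\<in>sphere 0 1. ?q u \<le> ?q y"
    using continuous_attains_inf[OF compact_sphere ne cont] by blast
  have "u \<noteq> 0" using u by auto
  then have pos: "?q u > 0" using assms by blast
  show ?thesis
  proof (intro exI[of _ "?q u"] conjI allI pos)
    fix v :: "real^'n"
    show "?q u * (norm v)^2 \<le> ?q v"
    proof (cases "v = 0")
      case True then show ?thesis by simp
    next
      case False
      let ?w = "inverse (norm v) *\<^sub>R v"
      have "?w \<in> sphere 0 1" using False by (simp add: norm_scaleR)
      then have "?q u \<le> ?q ?w" using umin by blast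
      also have "?q ?w = (inverse (norm v))^2 * ?q v"
        by (simp add: matrix_vector_mult_scaleR inner_scaleR_left inner_scaleR_right power2_eq_square)
      finally have "?q u \<le> (inverse (norm v))^2 * ?q v" .
      then have "?q u * (norm v)^2 \<le> (inverse (norm v))^2 * ?q v * (norm v)^2"
        by (simp add: mult_right_mono)
      also have "\<dots> = ?q v" using False by (simp add: field_simps power2_eq_square)
      finally show ?thesis .
    qed
  qed
qed

lemma local_antitone:
  fixes W :: "real \<Rightarrow> real"
  assumes R: "\<And>s. t0 \<le> s \<Longrightarrow> \<exists>e>0. \<forall>u. s < u \<and> u < s + e \<longrightarrow> W u \<le> W s"
    and L: "\<And>s. t0 < s \<Longrightarrow> \<exists>e>0. \<forall>u. s - e < u \<and> u < s \<longrightarrow> W s \<le> W u"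
    and ab: "t0 \<le> a" "a \<le> b"
  shows "W b \<le> W a"
proof -
  define T where "T = {u. a \<le> u \<and> u \<le> b \<and> (\<forall>v. a \<le> v \<and> v \<le> u \<longrightarrow> W v \<le> W a)}"
  have aT: "a \<in> T" using ab by (auto simp: T_def)
  have bdd: "bdd_above T" by (auto simp: T_def bdd_above_def)
  define c where "c = Sup T"
  have ac: "a \<le> c" using cSup_upper[OF aT bdd] c_def by simp
  have cb: "c \<le> b" unfolding c_def by (rule cSup_least) (use aT in \<open>auto simp: T_def\<close>)
  have below: "W v \<le> W a" if "a \<le> v" "v < c" for v
  proof -
    have "v < Sup T" "T \<noteq> {}" using that aT c_def by auto
    then obtain u where "u \<in> T" "v < u" by (rule less_cSupE)
    then show ?thesis using that by (auto simp: T_def)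
  qed
  have Wc: "W c \<le> W a"
  proof (cases "c = a")
    case False
    then have "t0 < c" using ac ab by auto
    then obtain e where e: "e > 0" "\<forall>u. c - e < u \<and> u < c \<longrightarrow> W c \<le> W u" using L by blast
    define u where "u = max a (c - e/2)"
    have "c - e < u" "u < c" "a \<le> u" using e False ac by (auto simp: u_def)
    then show ?thesis using e below[of u] by fastforce
  qed simp
  have cT: "c \<in> T" using Wc below ac cb by (auto simp: T_def) (metis order_le_less)
  show ?thesis
  proof (cases "c = b")
    case True then show ?thesis using Wc by simp
  next
    case False
    then have cb': "c < b" using cb by simp
    obtain e where e: "e > 0" "\<forall>u. c < u \<and> u < c + e \<longrightarrow> W u \<le> W c" using R[of c] ac ab by auto
    define u where "u = min b (c + e/2)"
    have u: "c < u" "u \<le> b" "u < c + e" using e cb' by (auto simp: u_def)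
    have "u \<in> T" unfolding T_def
    proof (intro CollectI conjI allI impI)
      fix v assume v: "a \<le> v \<and> v \<le> u"
      show "W v \<le> W a"
      proof (cases "v \<le> c")
        case True then show ?thesis using cT v by (auto simp: T_def)
      next
        case False then have "W v \<le> W c" using e u v by auto
        then show ?thesis using Wc by simp
      qed
    qed (use u ac in auto)
    then have "u \<le> c" unfolding c_def by (rule cSup_upper[OF _ bdd])
    then show ?thesis using u by simp
  qed
qed

lemma isCont_nat_local:
  fixes \<sigma> :: "real \<Rightarrow> nat"
  assumes "isCont \<sigma> s"
  shows "\<exists>U. open U \<and> s \<in> U \<and> (\<forall>u\<in>U. \<sigma> u = \<sigma> s \<and> isCont \<sigma> u)"
proof -
  have "eventually (\<lambda>u. \<sigma> u \<in> {\<sigma> s}) (at s)"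
    using assms unfolding isCont_def tendsto_def by (meson open_discrete singletonI)
  then obtain U where U: "open U" "s \<in> U" "\<forall>u\<in>U. u \<noteq> s \<longrightarrow> \<sigma> u = \<sigma> s"
    unfolding eventually_at_topological by auto
  have "\<forall>u\<in>U. \<sigma> u = \<sigma> s" using U by auto
  moreover have "isCont \<sigma> u" if "u \<in> U" for u
  proof -
    have "eventually (\<lambda>v. v \<in> U) (at u)"
      using U(1) that by (simp add: eventually_at_topological) blast
    then have "eventually (\<lambda>v. \<sigma> v = \<sigma> u) (at u)"
      by eventually_elim (use \<open>\<forall>u\<in>U. \<sigma> u = \<sigma> s\<close> that in auto)
    then show ?thesis unfolding isCont_def by (rule tendsto_eventually)
  qed
  ultimately show ?thesis using U by blast
qed

lemma gap:
  fixes \<sigma> :: "real \<Rightarrow> nat"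
  assumes "\<forall>a b. finite {t \<in> {a..b}. \<not> isCont \<sigma> t}"
  shows "\<exists>e>0. \<forall>u. u \<noteq> s \<and> \<bar>u - s\<bar> < e \<longrightarrow> isCont \<sigma> u"
proof -
  have "finite {t \<in> {s-1..s+1}. \<not> isCont \<sigma> t}" using assms by blast
  from finite_set_avoid[OF this, of s] obtain d where d: "d > 0"
    "\<forall>x\<in>{t \<in> {s-1..s+1}. \<not> isCont \<sigma> t}. x \<noteq> s \<longrightarrow> d \<le> dist s x" by blast
  show ?thesis
  proof (intro exI[of _ "min d 1"] conjI allI impI)
    fix u assume u: "u \<noteq> s \<and> \<bar>u - s\<bar> < min d 1"
    show "isCont \<sigma> u"
    proof (rule ccontr)
      assume "\<not> isCont \<sigma> u"
      then have "u \<in> {t \<in> {s-1..s+1}. \<not> isCont \<sigma> t}" using u by auto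
      then have "d \<le> dist s u" using d u by blast
      then show False using u by (simp add: dist_real_def abs_minus_commute)
    qed
  qed (use d in auto)
qed

lemma mat_pow_Suc: "mat_pow M (Suc m) = M ** mat_pow M m"
  by (simp add: mat_pow_def)

lemma mat_image_0: "mat_image (mat_pow M 0) = UNIV"
  by (auto simp: mat_pow_def mat_image_def)

lemma per_solution:
  fixes E A :: "nat \<Rightarrow> real^'n^'n" and C :: "nat \<Rightarrow> real^'n^'m" and P :: "real^'n^'n"
  assumes sol: "switched_solution N E A \<sigma> x t0"
    and jump: "jump_nonincreasing P \<sigma> x t0"
    and inv: "\<forall>i\<in>{1..N}. matrix_inv (A i) ** A i = mat 1"
    and C_ker: "\<forall>i\<in>{1..N}. \<forall>x. x \<in> consistency_space (E i) (A i) \<longleftrightarrow> C i *v x = 0"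
    and lowb: "\<forall>i\<in>{1..N}. \<forall>v. C i *v v = 0 \<longrightarrow> l * (norm v)^2 \<le> v \<bullet> (P *v v)"
    and decay: "\<forall>i\<in>{1..N}. \<forall>y. C i *v y = 0 \<longrightarrow>
        ((matrix_inv (A i) ** E i) *v y) \<bullet> (P *v y) + y \<bullet> (P *v ((matrix_inv (A i) ** E i) *v y))
          \<le> - c * (((matrix_inv (A i) ** E i) *v y) \<bullet> (P *v ((matrix_inv (A i) ** E i) *v y)))"
    and upb: "\<forall>v. v \<bullet> (P *v v) \<le> Bp * (norm v)^2"
    and l: "l > 0" and c: "c > 0" and Bp: "Bp > 0"
  shows "\<forall>t\<ge>t0. l * (norm (x t))^2 \<le> exp (- c * (t - t0)) * (Bp * (norm (x t0))^2)"
proof -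
  define Nm where "Nm i = matrix_inv (A i) ** E i" for i
  define V where "V v = v \<bullet> (P *v v)" for v
  define W where "W u = exp (c * (u - t0)) * V (x u)" for u
  have rng: "\<And>t. \<sigma> t \<in> {1..N}" and fin: "\<forall>a b. finite {t \<in> {a..b}. \<not> isCont \<sigma> t}"
    using sol by (auto simp: switched_solution_def switching_signal_def)
  have der: "\<And>t. t \<ge> t0 \<Longrightarrow> isCont \<sigma> t \<Longrightarrow> \<exists>x'. (x has_vector_derivative x') (at t within {t0..}) \<and>
              E (\<sigma> t) *v x' = A (\<sigma> t) *v x t"
    using sol by (auto simp: switched_solution_def)
  have jmp: "\<And>t. t \<ge> t0 \<Longrightarrow> \<not> isCont \<sigma> t \<Longrightarrow> (\<exists>r. (x \<longlongrightarrow> r) (at_right t)) \<and>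
        (t > t0 \<longrightarrow> (\<exists>l. (x \<longlongrightarrow> l) (at_left t))) \<and>
        ((x \<longlongrightarrow> x t) (at_right t) \<or> (t > t0 \<and> (x \<longlongrightarrow> x t) (at_left t)))"
    using sol by (auto simp: switched_solution_def)
  have VN: "x t = Nm (\<sigma> t) *v x'" if "E (\<sigma> t) *v x' = A (\<sigma> t) *v x t" for t x'
  proof -
    have "Nm (\<sigma> t) *v x' = matrix_inv (A (\<sigma> t)) *v (A (\<sigma> t) *v x t)"
      using that by (simp add: Nm_def matrix_vector_mul_assoc[symmetric])
    also have "\<dots> = x t" using inv rng by (simp add: matrix_vector_mul_assoc)
    finally show ?thesis by simp
  qed
  have evsame: "eventually (\<lambda>u. isCont \<sigma> u \<and> \<sigma> u = \<sigma> s \<and> u \<ge> t0) (at s within {t0..})"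
    if sc: "isCont \<sigma> s" for s
  proof -
    obtain U where U: "open U" "s \<in> U" "\<forall>u\<in>U. \<sigma> u = \<sigma> s \<and> isCont \<sigma> u"
      using isCont_nat_local[OF sc] by blast
    have "eventually (\<lambda>u. u \<in> U) (nhds s)"
      using U(1,2) by (rule eventually_nhds_in_open)
    then show ?thesis unfolding eventually_at_filter
    proof (rule eventually_mono)
      fix u assume "u \<in> U"
      then show "u \<noteq> s \<longrightarrow> u \<in> {t0..} \<longrightarrow> isCont \<sigma> u \<and> \<sigma> u = \<sigma> s \<and> t0 \<le> u"
        using U(3) by simp
    qed
  qed
  have inimg: "\<forall>s. s \<ge> t0 \<longrightarrow> isCont \<sigma> s \<longrightarrow> x s \<in> mat_image (mat_pow (Nm (\<sigma> s)) m)" for m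
  proof (induction m)
    case 0 then show ?case by (simp add: mat_image_0)
  next
    case (Suc m)
    show ?case
    proof (intro allI impI)
      fix s assume s: "s \<ge> t0" "isCont \<sigma> s"
      obtain x' where x': "(x has_vector_derivative x') (at s within {t0..})"
        "E (\<sigma> s) *v x' = A (\<sigma> s) *v x s" using der s by blast
      have "eventually (\<lambda>u. x u \<in> mat_image (mat_pow (Nm (\<sigma> s)) m)) (at s within {t0..})"
        using evsame[OF s(2)] by eventually_elim (use Suc in auto)
      then have "x' \<in> mat_image (mat_pow (Nm (\<sigma> s)) m)"
        using deriv_in_subspace[OF x'(1) s(1) mat_image_closed mat_image_subspace] Suc s by blast
      then obtain w where "x' = mat_pow (Nm (\<sigma> s)) m *v w" by (auto simp: mat_image_def)
      then have "x s = mat_pow (Nm (\<sigma> s)) (Suc m) *v w"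
        using VN[OF x'(2)] by (simp add: mat_pow_Suc matrix_vector_mul_assoc)
      then show "x s \<in> mat_image (mat_pow (Nm (\<sigma> s)) (Suc m))" by (auto simp: mat_image_def)
    qed
  qed
  have incons: "x s \<in> consistency_space (E (\<sigma> s)) (A (\<sigma> s))" if "s \<ge> t0" "isCont \<sigma> s" for s
    using inimg that by (simp add: consistency_space_def Nm_def)
  have key: "\<exists>x'. (x has_vector_derivative x') (at s within {t0..}) \<and> x s = Nm (\<sigma> s) *v x'
      \<and> C (\<sigma> s) *v x' = 0 \<and> C (\<sigma> s) *v x s = 0" if s: "s \<ge> t0" "isCont \<sigma> s" for s
  proof -
    obtain x' where x': "(x has_vector_derivative x') (at s within {t0..})"
      "E (\<sigma> s) *v x' = A (\<sigma> s) *v x s" using der s by blast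
    have "eventually (\<lambda>u. x u \<in> consistency_space (E (\<sigma> s)) (A (\<sigma> s))) (at s within {t0..})"
      using evsame[OF s(2)] by eventually_elim (metis incons)
    then have "x' \<in> consistency_space (E (\<sigma> s)) (A (\<sigma> s))"
      using deriv_in_subspace[OF x'(1) s(1) mat_image_closed mat_image_subspace] incons[OF s]
      unfolding consistency_space_def by blast
    then have "C (\<sigma> s) *v x' = 0" using C_ker[rule_format, OF rng[of s]] by simp
    moreover have "C (\<sigma> s) *v x s = 0" using C_ker[rule_format, OF rng[of s]] incons[OF s] by simp
    ultimately show ?thesis using x' VN[OF x'(2)] by blast
  qed
  have Wder: "\<exists>D. (W has_real_derivative D) (at s within {t0..}) \<and> D \<le> 0" if s: "s \<ge> t0" "isCont \<sigma> s" for s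
  proof -
    obtain x' where x': "(x has_vector_derivative x') (at s within {t0..})" "x s = Nm (\<sigma> s) *v x'"
      "C (\<sigma> s) *v x' = 0" using key[OF s] by blast
    have hP: "((\<lambda>u. P *v x u) has_vector_derivative (P *v x')) (at s within {t0..})"
      by (rule bounded_linear.has_vector_derivative[OF matrix_vector_mul_bounded_linear x'(1)])
    have hV: "((\<lambda>u. V (x u)) has_real_derivative (x s \<bullet> (P *v x') + x' \<bullet> (P *v x s))) (at s within {t0..})"
      unfolding has_real_derivative_iff_has_vector_derivative V_def
      by (rule bounded_bilinear.has_vector_derivative[OF bounded_bilinear_inner x'(1) hP])
    have hE: "((\<lambda>u. exp (c * (u - t0))) has_real_derivative (exp (c * (s - t0)) * c)) (at s within {t0..})"
      by (auto intro!: derivative_eq_intros)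
    have hW: "(W has_real_derivative (exp (c * (s - t0)) * c * V (x s) + exp (c * (s - t0)) * (x s \<bullet> (P *v x') + x' \<bullet> (P *v x s)))) (at s within {t0..})"
      unfolding W_def by (rule DERIV_mult'[OF hE hV, THEN DERIV_cong]) (simp add: algebra_simps)
    have dec: "x s \<bullet> (P *v x') + x' \<bullet> (P *v x s) \<le> - c * V (x s)"
      using decay[rule_format, OF rng[of s] x'(3)] x'(2) unfolding V_def Nm_def by simp
    have "exp (c * (s - t0)) * c * V (x s) + exp (c * (s - t0)) * (x s \<bullet> (P *v x') + x' \<bullet> (P *v x s))
        = exp (c * (s - t0)) * (c * V (x s) + (x s \<bullet> (P *v x') + x' \<bullet> (P *v x s)))" by (simp add: algebra_simps)
    also have "\<dots> \<le> 0" using dec by (intro mult_nonneg_nonpos) auto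
    finally show ?thesis using hW by blast
  qed
  have mono: "W u \<le> W v" if mv: "t0 < v" "v \<le> u" "\<forall>w\<in>{v..u}. isCont \<sigma> w" for u v
  proof -
    have "W v \<ge> W u"
    proof (rule DERIV_nonpos_imp_nonincreasing[OF mv(2)])
      fix w assume w: "v \<le> w" "w \<le> u"
      then have "t0 \<le> w" "isCont \<sigma> w" using mv by auto
      then obtain D where D: "(W has_real_derivative D) (at w within {t0..})" "D \<le> 0"
        using Wder[of w] by blast
      have "at w within {t0..} = at w" using w mv by (intro at_within_interior) auto
      then show "\<exists>y. (W has_real_derivative y) (at w) \<and> y \<le> 0" using D by auto
    qed
    then show ?thesis by simp
  qed
  have Vcont: "((\<lambda>u. V (f u)) \<longlongrightarrow> V r) F" if "(f \<longlongrightarrow> r) F" for f and r :: "real^'n" and F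
    unfolding V_def
    by (intro tendsto_inner that bounded_linear.tendsto[OF matrix_vector_mul_bounded_linear])
  have Wlim: "((\<lambda>u. W u) \<longlongrightarrow> exp (c * (s - t0)) * V r) F" if "(x \<longlongrightarrow> r) F" "((\<lambda>u. u) \<longlongrightarrow> s) F" for r s F
    unfolding W_def by (intro tendsto_mult Vcont that tendsto_exp tendsto_mult_left tendsto_diff tendsto_const)
  have rlim: "\<exists>r. (x \<longlongrightarrow> r) (at_right s) \<and> V r \<le> V (x s)" if s: "s \<ge> t0" for s
  proof (cases "isCont \<sigma> s")
    case True
    then obtain x' where "(x has_vector_derivative x') (at s within {t0..})" using der s by blast
    then have "(x \<longlongrightarrow> x s) (at s within {t0..})"
      using has_vector_derivative_continuous continuous_within by blast
    moreover have "at_right s \<le> at s within {t0..}" by (rule at_le) (use s in auto)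
    ultimately show ?thesis using tendsto_mono by blast
  next
    case False
    note j = jmp[OF s False]
    then obtain r where r: "(x \<longlongrightarrow> r) (at_right s)" by blast
    show ?thesis
    proof (cases "(x \<longlongrightarrow> x s) (at_right s)")
      case True
      then show ?thesis by blast
    next
      case F2: False
      then have s': "s > t0" "(x \<longlongrightarrow> x s) (at_left s)" using j by auto
      have "Lim (at_left s) x = x s" by (rule tendsto_Lim) (use s' in auto)
      moreover have "Lim (at_right s) x = r" by (rule tendsto_Lim) (use r in auto)
      moreover have "Lim (at_right s) x \<bullet> (P *v Lim (at_right s) x) \<le> Lim (at_left s) x \<bullet> (P *v Lim (at_left s) x)"
        using jump[unfolded jump_nonincreasing_def, rule_format, OF s'(1) False] by (simp add: Let_def)
      ultimately have "V r \<le> V (x s)" unfolding V_def by simp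
      then show ?thesis using r by blast
    qed
  qed
  have llim: "\<exists>l. (x \<longlongrightarrow> l) (at_left s) \<and> V (x s) \<le> V l" if s: "s > t0" for s
  proof (cases "isCont \<sigma> s")
    case True
    obtain x' where "(x has_vector_derivative x') (at s within {t0..})" using der[of s] s True by fastforce
    then have "(x \<longlongrightarrow> x s) (at s within {t0..})"
      using has_vector_derivative_continuous continuous_within by blast
    moreover have "at s within {t0..} = at s" using s by (intro at_within_interior) auto
    moreover have "at_left s \<le> at s" by (simp add: at_le)
    ultimately have "(x \<longlongrightarrow> x s) (at_left s)" using tendsto_mono by metis
    then show ?thesis by blast
  next
    case False
    note j = jmp[of s] s False
    then obtain l where lm: "(x \<longlongrightarrow> l) (at_left s)" by fastforce
    show ?thesis
    proof (cases "(x \<longlongrightarrow> x s) (at_left s)")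
      case True
      then show ?thesis by blast
    next
      case F2: False
      then have rr: "(x \<longlongrightarrow> x s) (at_right s)" using j by auto
      have "Lim (at_left s) x = l" by (rule tendsto_Lim) (use lm in auto)
      moreover have "Lim (at_right s) x = x s" by (rule tendsto_Lim) (use rr in auto)
      moreover have "Lim (at_right s) x \<bullet> (P *v Lim (at_right s) x) \<le> Lim (at_left s) x \<bullet> (P *v Lim (at_left s) x)"
        using jump[unfolded jump_nonincreasing_def, rule_format, OF s False] by (simp add: Let_def)
      ultimately have "V (x s) \<le> V l" unfolding V_def by simp
      then show ?thesis using lm by blast
    qed
  qed
  have R: "\<exists>e>0. \<forall>u. s < u \<and> u < s + e \<longrightarrow> W u \<le> W s" if s: "t0 \<le> s" for s
  proof -
    obtain e where e: "e > 0" "\<forall>u. u \<noteq> s \<and> \<bar>u - s\<bar> < e \<longrightarrow> isCont \<sigma> u" using gap[OF fin] by blast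
    obtain r where r: "(x \<longlongrightarrow> r) (at_right s)" "V r \<le> V (x s)" using rlim[OF s] by blast
    have "W u \<le> W s" if u: "s < u" "u < s + e" for u
    proof -
      have ev: "eventually (\<lambda>v. W u \<le> W v) (at_right s)"
        unfolding eventually_at_right_field
      proof (intro exI[of _ u] conjI allI impI)
        fix v assume "s < v" "v < u"
        then show "W u \<le> W v" using s u e by (intro mono) auto
      qed (use u in auto)
      have "W u \<le> exp (c * (s - t0)) * V r"
        by (rule tendsto_lowerbound[OF Wlim[OF r(1)] ev]) (auto intro: tendsto_ident_at)
      also have "\<dots> \<le> W s" unfolding W_def using r(2) by simp
      finally show ?thesis .
    qed
    then show ?thesis using e by blast
  qed
  have L: "\<exists>e>0. \<forall>u. s - e < u \<and> u < s \<longrightarrow> W s \<le> W u" if s: "t0 < s" for s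
  proof -
    obtain e where e: "e > 0" "\<forall>u. u \<noteq> s \<and> \<bar>u - s\<bar> < e \<longrightarrow> isCont \<sigma> u" using gap[OF fin] by blast
    obtain l where lm: "(x \<longlongrightarrow> l) (at_left s)" "V (x s) \<le> V l" using llim[OF s] by blast
    have "W s \<le> W u" if u: "s - min e (s - t0) < u" "u < s" for u
    proof -
      have ev: "eventually (\<lambda>v. W v \<le> W u) (at_left s)"
        unfolding eventually_at_left_field
      proof (intro exI[of _ u] conjI allI impI)
        fix v assume "u < v" "v < s"
        then show "W v \<le> W u" using s u e by (intro mono) auto
      qed (use u in auto)
      have "W s \<le> exp (c * (s - t0)) * V l" unfolding W_def using lm(2) by simp
      also have "exp (c * (s - t0)) * V l \<le> W u"
        by (rule tendsto_upperbound[OF Wlim[OF lm(1)] ev]) (auto intro: tendsto_ident_at)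
      finally show ?thesis .
    qed
    then show ?thesis using e s by (intro exI[of _ "min e (s - t0)"]) auto
  qed
  have Wt: "W t \<le> W t0" if "t \<ge> t0" for t
    by (rule local_antitone[OF R L order_refl that]) auto
  define G where "G = {v. l * (norm v)^2 \<le> V v}"
  have Gcl: "closed G" unfolding G_def V_def
    by (intro closed_Collect_le continuous_intros linear_continuous_on matrix_vector_mul_bounded_linear)
  have inG_cont: "x s \<in> G" if sg: "s \<ge> t0" "isCont \<sigma> s" for s
  proof -
    have "C (\<sigma> s) *v x s = 0" using key[OF sg] by blast
    then show ?thesis using lowb rng[of s] unfolding G_def V_def by simp
  qed
  have inG: "x t \<in> G" if t: "t \<ge> t0" for t
  proof (cases "isCont \<sigma> t")
    case True then show ?thesis using inG_cont t by blast
  next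
    case False
    obtain e where e: "e > 0" "\<forall>u. u \<noteq> t \<and> \<bar>u - t\<bar> < e \<longrightarrow> isCont \<sigma> u" using gap[OF fin] by blast
    have "(x \<longlongrightarrow> x t) (at_right t) \<or> (t > t0 \<and> (x \<longlongrightarrow> x t) (at_left t))" using jmp[OF t False] by blast
    then show ?thesis
    proof
      assume h: "(x \<longlongrightarrow> x t) (at_right t)"
      have "eventually (\<lambda>u. x u \<in> G) (at_right t)"
        unfolding eventually_at_right_field
        by (intro exI[of _ "t + e"] conjI allI impI inG_cont) (use e t in auto)
      then show ?thesis using Lim_in_closed_set[OF Gcl _ _ h] by simp
    next
      assume h: "t > t0 \<and> (x \<longlongrightarrow> x t) (at_left t)"
      have "eventually (\<lambda>u. x u \<in> G) (at_left t)"
        unfolding eventually_at_left_field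
        by (intro exI[of _ "max t0 (t - e)"] conjI allI impI inG_cont) (use e h in auto)
      then show ?thesis using Lim_in_closed_set[OF Gcl _ _ conjunct2[OF h]] by simp
    qed
  qed
  show ?thesis
  proof (intro allI impI)
    fix t assume t: "t \<ge> t0"
    have "l * (norm (x t))^2 \<le> V (x t)" using inG[OF t] by (simp add: G_def)
    also have "V (x t) = exp (- c * (t - t0)) * W t"
    proof -
      have "exp (- c * (t - t0)) * exp (c * (t - t0)) = 1" by (simp add: exp_add[symmetric])
      then show ?thesis by (simp add: W_def mult.assoc[symmetric])
    qed
    also have "\<dots> \<le> exp (- c * (t - t0)) * W t0" using Wt[OF t] by simp
    also have "W t0 = V (x t0)" by (simp add: W_def)
    also have "exp (- c * (t - t0)) * V (x t0) \<le> exp (- c * (t - t0)) * (Bp * (norm (x t0))^2)"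
      using upb by (simp add: V_def)
    finally show "l * (norm (x t))^2 \<le> exp (- c * (t - t0)) * (Bp * (norm (x t0))^2)" .
  qed
qed

lemma neg_mat_vec: "(- M) *v v = - (M *v (v::real^'n))" for M :: "real^'n^'m"
  by (simp add: matrix_vector_mult_def vec_eq_iff sum_negf)

lemma inner_transpose: "y \<bullet> (transpose M *v w) = (M *v y) \<bullet> (w::real^'m)" for M :: "real^'n^'m"
  by (metis inner_commute dot_lmul_matrix transpose_matrix_vector)

lemma inner_vmul: "y \<bullet> (w v* M) = (M *v y) \<bullet> (w::real^'m)" for M :: "real^'n^'m"
  by (metis inner_commute dot_lmul_matrix)

theorem corollary1:
  fixes N :: nat
    and E A :: "nat \<Rightarrow> real^'n^'n"
    and C :: "nat \<Rightarrow> real^'n^'m"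
    and P :: "real^'n^'n"
    and S :: "((real \<Rightarrow> nat) \<times> (real \<Rightarrow> real^'n) \<times> real) set"
  assumes A_inv: "\<forall>i\<in>{1..N}. invertible (A i)"
    and C_ker: "\<forall>i\<in>{1..N}. \<forall>x. x \<in> consistency_space (E i) (A i) \<longleftrightarrow> C i *v x = 0"
    and P_sym: "transpose P = P"
    and LMI1: "\<forall>i\<in>{1..N}. pos_def (P + transpose (C i) ** C i)"
    and LMI2: "\<forall>i\<in>{1..N}. neg_def (P ** matrix_inv (A i) ** E i
                 + transpose (E i) ** transpose (matrix_inv (A i)) ** P
                 - transpose (C i) ** C i)"
    and S_sol: "\<forall>(\<sigma>, x, t0)\<in>S. switched_solution N E A \<sigma> x t0"
    and S_jump: "\<forall>(\<sigma>, x, t0)\<in>S. jump_nonincreasing P \<sigma> x t0"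
  shows "GUES S"
proof -
  define Nm where "Nm i = matrix_inv (A i) ** E i" for i
  have inv: "\<forall>i\<in>{1..N}. matrix_inv (A i) ** A i = mat 1"
  proof
    fix i assume "i \<in> {1..N}"
    then have "\<exists>A'. A i ** A' = mat 1 \<and> A' ** A i = mat 1" using A_inv by (simp add: invertible_def)
    then show "matrix_inv (A i) ** A i = mat 1" unfolding matrix_inv_def by (rule someI2_ex) blast
  qed
  have "\<forall>i\<in>{1..N}. \<exists>li>0. \<forall>v. li * (norm v)^2 \<le> v \<bullet> ((P + transpose (C i) ** C i) *v v)"
    using LMI1 posdef_unif unfolding pos_def_def by blast
  then obtain li where li: "\<forall>i\<in>{1..N}. li i > 0 \<and> (\<forall>v. li i * (norm v)^2 \<le> v \<bullet> ((P + transpose (C i) ** C i) *v v))"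
    using bchoice[of "{1..N}"] by meson
  have "\<forall>i\<in>{1..N}. \<exists>mi>0. \<forall>v. mi * (norm v)^2 \<le> v \<bullet> ((- (P ** matrix_inv (A i) ** E i
                 + transpose (E i) ** transpose (matrix_inv (A i)) ** P
                 - transpose (C i) ** C i)) *v v)"
  proof
    fix i assume i: "i \<in> {1..N}"
    let ?M = "P ** matrix_inv (A i) ** E i
                 + transpose (E i) ** transpose (matrix_inv (A i)) ** P
                 - transpose (C i) ** C i"
    have h: "\<forall>x. x \<noteq> 0 \<longrightarrow> x \<bullet> (?M *v x) < 0" using LMI2 i unfolding neg_def_def by blast
    have "\<forall>x. x \<noteq> 0 \<longrightarrow> x \<bullet> ((- ?M) *v x) > 0" unfolding neg_mat_vec inner_minus_right using h by auto
    then show "\<exists>mi>0. \<forall>v. mi * (norm v)^2 \<le> v \<bullet> ((- ?M) *v v)" by (rule posdef_unif)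
  qed
  then obtain mi where mi: "\<forall>i\<in>{1..N}. mi i > 0 \<and> (\<forall>v. mi i * (norm v)^2 \<le> v \<bullet> ((- (P ** matrix_inv (A i) ** E i
                 + transpose (E i) ** transpose (matrix_inv (A i)) ** P
                 - transpose (C i) ** C i)) *v v))"
    using bchoice[of "{1..N}"] by meson
  have "\<forall>i\<in>{1..N}. \<exists>B>0. \<forall>v. norm (Nm i *v v) \<le> B * norm v" using mat_bound by blast
  then obtain Bi where Bi: "\<forall>i\<in>{1..N}. Bi i > 0 \<and> (\<forall>v. norm (Nm i *v v) \<le> Bi i * norm v)"
    using bchoice[of "{1..N}"] by meson
  obtain Bp where Bp: "Bp > 0" "\<forall>v. norm (P *v v) \<le> Bp * norm v" using mat_bound by blast
  define l where "l = Min (insert 1 (li ` {1..N}))"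
  define m where "m = Min (insert 1 (mi ` {1..N}))"
  define B where "B = Max (insert 1 (Bi ` {1..N}))"
  have l: "l > 0" "\<forall>i\<in>{1..N}. l \<le> li i"
    unfolding l_def using li by (subst Min_gr_iff; auto) (intro ballI Min_le; auto)
  have m: "m > 0" "\<forall>i\<in>{1..N}. m \<le> mi i"
    unfolding m_def using mi by (subst Min_gr_iff; auto) (intro ballI Min_le; auto)
  have B: "B \<ge> 1" "\<forall>i\<in>{1..N}. Bi i \<le> B"
    unfolding B_def by (intro Max_ge; auto) (intro ballI Max_ge; auto)
  define c where "c = m / (Bp * B^2)"
  have c: "c > 0" using m B Bp by (simp add: c_def)
  have upb: "\<forall>v. v \<bullet> (P *v v) \<le> Bp * (norm v)^2"
  proof
    fix v :: "real^'n"
    have "v \<bullet> (P *v v) \<le> norm v * norm (P *v v)" by (rule norm_cauchy_schwarz)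
    also have "\<dots> \<le> norm v * (Bp * norm v)" using Bp by (simp add: mult_left_mono)
    finally show "v \<bullet> (P *v v) \<le> Bp * (norm v)^2" by (simp add: power2_eq_square mult_ac)
  qed
  have lowb: "\<forall>i\<in>{1..N}. \<forall>v. C i *v v = 0 \<longrightarrow> l * (norm v)^2 \<le> v \<bullet> (P *v v)"
  proof (intro ballI allI impI)
    fix i v assume i: "i \<in> {1..N}" and Cv: "C i *v v = 0"
    have "(P + transpose (C i) ** C i) *v v = P *v v"
      using Cv by (simp add: matrix_vector_mult_add_rdistrib matrix_vector_mul_assoc[symmetric])
    then have "li i * (norm v)^2 \<le> v \<bullet> (P *v v)" using li i by metis
    moreover have "l * (norm v)^2 \<le> li i * (norm v)^2" using l i by (simp add: mult_right_mono)
    ultimately show "l * (norm v)^2 \<le> v \<bullet> (P *v v)" by linarith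
  qed
  have decay: "\<forall>i\<in>{1..N}. \<forall>y. C i *v y = 0 \<longrightarrow>
        ((matrix_inv (A i) ** E i) *v y) \<bullet> (P *v y) + y \<bullet> (P *v ((matrix_inv (A i) ** E i) *v y))
          \<le> - c * (((matrix_inv (A i) ** E i) *v y) \<bullet> (P *v ((matrix_inv (A i) ** E i) *v y)))"
  proof (intro ballI allI impI)
    fix i y assume i: "i \<in> {1..N}" and Cy: "C i *v y = 0"
    let ?M = "P ** matrix_inv (A i) ** E i
                 + transpose (E i) ** transpose (matrix_inv (A i)) ** P
                 - transpose (C i) ** C i"
    have tN: "transpose (E i) ** transpose (matrix_inv (A i)) = transpose (Nm i)"
      by (simp add: Nm_def matrix_transpose_mul)
    have "y \<bullet> (?M *v y) = y \<bullet> (P *v (Nm i *v y)) + y \<bullet> (transpose (Nm i) *v (P *v y))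
        - y \<bullet> (transpose (C i) *v (C i *v y))"
      by (simp add: matrix_vector_mult_add_rdistrib matrix_vector_mult_diff_rdistrib inner_add_right
          inner_diff_right matrix_vector_mul_assoc[symmetric] Nm_def tN[symmetric] matrix_mul_assoc vector_matrix_mul_assoc)
    also have "\<dots> = (Nm i *v y) \<bullet> (P *v y) + y \<bullet> (P *v (Nm i *v y))"
      using Cy by (simp add: inner_vmul)
    finally have eq: "(Nm i *v y) \<bullet> (P *v y) + y \<bullet> (P *v (Nm i *v y)) = y \<bullet> (?M *v y)" by simp
    have "mi i * (norm y)^2 \<le> y \<bullet> ((- ?M) *v y)" using mi i by blast
    then have d0: "mi i * (norm y)^2 \<le> - (y \<bullet> (?M *v y))"
      unfolding neg_mat_vec inner_minus_right .
    have "m * (norm y)^2 \<le> mi i * (norm y)^2"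
      using m i by (intro mult_right_mono) auto
    with d0 have d1: "y \<bullet> (?M *v y) \<le> - m * (norm y)^2" by linarith
    have nb0: "norm (Nm i *v y) \<le> Bi i * norm y" using Bi i by blast
    have "Bi i * norm y \<le> B * norm y" using B i by (intro mult_right_mono) auto
    with nb0 have nb: "norm (Nm i *v y) \<le> B * norm y" by linarith
    have "(Nm i *v y) \<bullet> (P *v (Nm i *v y)) \<le> Bp * (norm (Nm i *v y))^2" using upb by blast
    also have "\<dots> \<le> Bp * (B * norm y)^2"
      using nb Bp by (intro mult_left_mono power_mono) auto
    finally have vb: "c * ((Nm i *v y) \<bullet> (P *v (Nm i *v y))) \<le> c * (Bp * (B * norm y)^2)"
      using c by (intro mult_left_mono) auto
    have ceq: "c * (Bp * (B * norm y)^2) = m * (norm y)^2"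
    proof -
      have "Bp * B^2 \<noteq> 0" using Bp B by auto
      then show ?thesis unfolding c_def power_mult_distrib by simp
    qed
    have fin: "(Nm i *v y) \<bullet> (P *v y) + y \<bullet> (P *v (Nm i *v y))
          \<le> - (c * ((Nm i *v y) \<bullet> (P *v (Nm i *v y))))"
      using vb d1 eq ceq by linarith
    then show "((matrix_inv (A i) ** E i) *v y) \<bullet> (P *v y) + y \<bullet> (P *v ((matrix_inv (A i) ** E i) *v y))
          \<le> - c * (((matrix_inv (A i) ** E i) *v y) \<bullet> (P *v ((matrix_inv (A i) ** E i) *v y)))"
      unfolding Nm_def by simp
  qed
  define \<beta> where "\<beta> = sqrt (Bp / l)"
  define \<alpha> where "\<alpha> = c / 2"
  have bpos: "\<beta> > 0" and apos: "\<alpha> > 0" using Bp l c by (auto simp: \<beta>_def \<alpha>_def)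
  have main: "norm (x t) \<le> \<beta> * exp (- \<alpha> * (t - t0)) * norm (x t0)"
    if z: "(\<sigma>, x, t0) \<in> S" and t: "t \<ge> t0" for \<sigma> x t0 t
  proof -
    have sol: "switched_solution N E A \<sigma> x t0" "jump_nonincreasing P \<sigma> x t0"
      using S_sol S_jump z by auto
    have ineq: "l * (norm (x t))^2 \<le> exp (- c * (t - t0)) * (Bp * (norm (x t0))^2)"
      using per_solution[OF sol inv C_ker lowb decay upb l(1) c Bp(1)] t by blast
    have "(norm (x t))^2 \<le> (\<beta> * exp (- \<alpha> * (t - t0)) * norm (x t0))^2"
    proof -
      have "(\<beta> * exp (- \<alpha> * (t - t0)) * norm (x t0))^2 = (Bp / l) * (exp (- \<alpha> * (t - t0)))^2 * (norm (x t0))^2"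
        using Bp l by (simp add: \<beta>_def power_mult_distrib)
      also have "(exp (- \<alpha> * (t - t0)))^2 = exp (- c * (t - t0))"
        by (simp add: power2_eq_square exp_add[symmetric] \<alpha>_def)
      finally have "(\<beta> * exp (- \<alpha> * (t - t0)) * norm (x t0))^2 = exp (- c * (t - t0)) * (Bp * (norm (x t0))^2) / l"
        by simp
      moreover have "(norm (x t))^2 \<le> exp (- c * (t - t0)) * (Bp * (norm (x t0))^2) / l"
        using ineq l(1) by (simp add: field_simps)
      ultimately show ?thesis by simp
    qed
    moreover have "\<beta> * exp (- \<alpha> * (t - t0)) * norm (x t0) \<ge> 0" using Bp l by (simp add: \<beta>_def)
    ultimately show ?thesis by (rule power2_le_imp_le)
  qed
  show ?thesis unfolding GUES_def using bpos apos main by blast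
qed

end
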